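(* Let $\zeta$ be the Riemann zeta function. For every non-negative integer $n$, $$\lim_{x\to 0^+}\frac{2\ln(n!\,x)+\ln|\Gamma(-n-x)|+\ln|\Gamma(-n+x)|}{x^2}=\zeta(2)+\sum_{k=1}^n\frac{1}{k^2}.$$
   Context: $\Gamma$ is Euler's Gamma function on the real line. *)

theory Defs
  imports "HOL-Analysis.Analysis"
begin

text \<open>Riemann zeta function at 2, by its defining Dirichlet series
  zeta(2) = sum over k >= 1 of 1/k^2 (the only value of zeta the statement uses).\<close>
definition zeta2 :: real where
  "zeta2 = (\<Sum>k. 1 / (real (Suc k))^2)"

end

theory Submission imports Defs "HOL-Real_Asymp.Real_Asymp" begin

lemma not_int_shift:
  fixes x :: real and m :: nat
  assumes "0 < x" "x < 1"
  shows "- real m - x \<notin> \<int>" "- real m + x \<notin> \<int>"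
proof -
  have xn: "x \<notin> \<int>" proof
    assume "x \<in> \<int>"
    then obtain k where "x = of_int k" by (auto elim: Ints_cases)
    with assms show False by simp
  qed
  show "- real m - x \<notin> \<int>"
  proof
    assume "- real m - x \<in> \<int>"
    hence "- real m - (- real m - x) \<in> \<int>" by (intro Ints_diff) auto
    thus False using xn by simp
  qed
  show "- real m + x \<notin> \<int>"
  proof
    assume "- real m + x \<in> \<int>"
    hence "(- real m + x) + real m \<in> \<int>" by (intro Ints_add) auto
    thus False using xn by simp
  qed
qed

lemma Gamma_refl_real:
  fixes x :: real
  shows "Gamma x * Gamma (- x) = - pi / (x * sin (pi * x))"
proof -
  have "complex_of_real (Gamma x * Gamma (- x)) = Gamma (complex_of_real x) * Gamma (- complex_of_real x)"
    by (simp add: Gamma_complex_of_real flip: of_real_minus)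
  also have "\<dots> = - of_real pi / (of_real x * sin (of_real pi * of_real x))"
    by (rule Gamma_reflection_complex')
  also have "\<dots> = complex_of_real (- pi / (x * sin (pi * x)))"
    by (simp flip: sin_of_real)
  finally show ?thesis by (simp only: of_real_eq_iff)
qed

lemma aux_frac: fixes m x :: real assumes "m > 0"
  shows "1 - x^2 / m^2 = ((m + x) * (m - x)) / m^2"
  using assms by (simp add: field_simps power2_eq_square)

lemma key:
  fixes x :: real and n :: nat
  assumes "0 < x" "x < 1"
  shows "ln \<bar>Gamma (- real n - x)\<bar> + ln \<bar>Gamma (- real n + x)\<bar> + 2 * ln (fact n)
     = ln (pi / (x * sin (pi * x))) - (\<Sum>j=1..n. ln (1 - x^2 / (real j)^2))"
proof (induction n)
  case 0
  have s: "sin (pi * x) > 0" using assms by (intro sin_gt_zero) auto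
  have g1: "Gamma x > 0" using assms by simp
  have g2: "Gamma (- x) \<noteq> 0"
  proof -
    have "- x \<notin> \<int>" using not_int_shift(1)[OF assms, of 0] by simp
    then have "- x \<notin> \<int>\<^sub>\<le>\<^sub>0" by (auto simp: nonpos_Ints_def) (metis Ints_of_int minus_minus of_int_minus)
    then show ?thesis by (simp add: Gamma_eq_zero_iff)
  qed
  have "ln \<bar>Gamma (- x)\<bar> + ln \<bar>Gamma x\<bar> = ln \<bar>Gamma x * Gamma (- x)\<bar>"
    using g1 g2 by (simp add: ln_mult abs_mult)
  also have "\<dots> = ln (pi / (x * sin (pi * x)))"
    using s assms by (simp add: Gamma_refl_real abs_div abs_mult)
  finally show ?case by simp
next
  case (Suc n)
  define a where "a = - real (Suc n) - x"
  define b where "b = - real (Suc n) + x"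
  have an: "a \<notin> \<int>" "b \<notin> \<int>" using not_int_shift[OF assms, of "Suc n"] by (auto simp: a_def b_def)
  have an': "a \<notin> \<int>\<^sub>\<le>\<^sub>0" "b \<notin> \<int>\<^sub>\<le>\<^sub>0" using an by (auto simp: nonpos_Ints_def)
  have ga: "Gamma (a + 1) = a * Gamma a" using an'(1) by (rule Gamma_plus1)
  have gb: "Gamma (b + 1) = b * Gamma b" using an'(2) by (rule Gamma_plus1)
  have a1: "a + 1 = - real n - x" by (simp add: a_def)
  have b1: "b + 1 = - real n + x" by (simp add: b_def)
  have Ga: "Gamma a \<noteq> 0" "Gamma b \<noteq> 0" using an' by (auto simp: Gamma_eq_zero_iff)
  have aa: "\<bar>a\<bar> = real (Suc n) + x" using assms by (simp add: a_def)
  have bb: "\<bar>b\<bar> = real (Suc n) - x" using assms by (simp add: b_def)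
  have p1: "real (Suc n) + x > 0" "real (Suc n) - x > 0" using assms by auto
  have IH: "ln \<bar>a * Gamma a\<bar> + ln \<bar>b * Gamma b\<bar> + 2 * ln (fact n)
     = ln (pi / (x * sin (pi * x))) - (\<Sum>j=1..n. ln (1 - x^2 / (real j)^2))"
    using Suc.IH by (simp only: a1 b1 flip: ga gb)
  have "ln \<bar>a * Gamma a\<bar> + ln \<bar>b * Gamma b\<bar> = ln \<bar>Gamma a\<bar> + ln \<bar>Gamma b\<bar> + ln (real (Suc n) + x) + ln (real (Suc n) - x)"
    using Ga p1 by (simp add: abs_mult ln_mult aa bb)
  moreover have "ln (fact (Suc n) :: real) = ln (real (Suc n)) + ln (fact n)"
    by (simp add: ln_mult)
  moreover have "ln (1 - x^2 / (real (Suc n))^2) = ln (real (Suc n) + x) + ln (real (Suc n) - x) - 2 * ln (real (Suc n))"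
  proof -
    have "1 - x^2 / (real (Suc n))^2 = ((real (Suc n) + x) * (real (Suc n) - x)) / (real (Suc n))^2"
      by (rule aux_frac) simp
    also have "ln \<dots> = ln (real (Suc n) + x) + ln (real (Suc n) - x) - 2 * ln (real (Suc n))"
      using p1 by (simp add: ln_mult ln_div ln_realpow)
    finally show ?thesis .
  qed
  ultimately show ?case using IH
    by (simp add: a_def b_def algebra_simps)
qed

theorem mainTheorem4:
  fixes n :: nat
  shows "((\<lambda>x::real. (2 * ln (fact n * x) + ln \<bar>Gamma (- real n - x)\<bar>
            + ln \<bar>Gamma (- real n + x)\<bar>) / x^2)
          \<longlongrightarrow> zeta2 + (\<Sum>k=1..n. 1 / (real k)^2)) (at_right 0)"
proof -
  have z: "zeta2 = pi^2/6"
    unfolding zeta2_def using inverse_squares_sums by (simp add: sums_iff add.commute)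
  have L1: "((\<lambda>x::real. ln (pi * x / sin (pi * x)) / x^2) \<longlongrightarrow> pi^2/6) (at_right 0)"
  proof -
    have "((\<lambda>x::real. ln (pi * x / sin (pi * x)) / x^2) \<longlongrightarrow> pi * (inverse pi * (inverse pi * (pi * (pi * pi)))) / 6) (at_right 0)"
      by real_asymp
    moreover have "pi * (inverse pi * (inverse pi * (pi * (pi * pi)))) / 6 = pi^2/6"
      by (simp add: field_simps power2_eq_square)
    ultimately show ?thesis by simp
  qed
  have L2: "((\<lambda>x::real. ln (1 - x^2/j^2) / x^2) \<longlongrightarrow> - (1/j^2)) (at_right 0)" if "j > 0" for j :: real
  proof -
    have "((\<lambda>x::real. ln (1 - x^2/j^2) / x^2) \<longlongrightarrow> - inverse (j^2)) (at_right 0)"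
      using that by real_asymp
    thus ?thesis by (simp add: field_simps)
  qed
  have L3: "((\<lambda>x::real. ln (pi * x / sin (pi * x)) / x^2 - (\<Sum>j=1..n. ln (1 - x^2/(real j)^2) / x^2))
      \<longlongrightarrow> pi^2/6 - (\<Sum>j=1..n. - (1/(real j)^2))) (at_right 0)"
    by (intro tendsto_diff L1 tendsto_sum L2) auto
  have ev: "eventually (\<lambda>x::real. ln (pi * x / sin (pi * x)) / x^2 - (\<Sum>j=1..n. ln (1 - x^2/(real j)^2) / x^2)
      = (2 * ln (fact n * x) + ln \<bar>Gamma (- real n - x)\<bar> + ln \<bar>Gamma (- real n + x)\<bar>) / x^2) (at_right 0)"
  proof -
    have "eventually (\<lambda>x::real. 0 < x \<and> x < 1) (at_right 0)"
      by (simp add: eventually_at_right_field) (rule exI[of _ 1], auto)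
    thus ?thesis
    proof eventually_elim
      case (elim x)
      hence x: "0 < x" "x < 1" by auto
      have s: "sin (pi * x) > 0" using x by (intro sin_gt_zero) auto
      have "2 * ln (fact n * x) + ln \<bar>Gamma (- real n - x)\<bar> + ln \<bar>Gamma (- real n + x)\<bar>
          = (ln \<bar>Gamma (- real n - x)\<bar> + ln \<bar>Gamma (- real n + x)\<bar> + 2 * ln (fact n)) + 2 * ln x"
        using x by (simp add: ln_mult)
      also have "\<dots> = ln (pi / (x * sin (pi * x))) + 2 * ln x - (\<Sum>j=1..n. ln (1 - x^2 / (real j)^2))"
        using key[OF x, of n] by simp
      also have "ln (pi / (x * sin (pi * x))) + 2 * ln x = ln (pi * x / sin (pi * x))"
      proof -
        have "pi * x / sin (pi * x) = (pi / (x * sin (pi * x))) * (x * x)"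
          using x s by (simp add: field_simps)
        hence "ln (pi * x / sin (pi * x)) = ln (pi / (x * sin (pi * x))) + ln (x * x)"
          using x s by (simp add: ln_mult del: times_divide_eq_left)
        also have "ln (x * x) = 2 * ln x" using x by (simp add: ln_mult)
        finally show ?thesis by simp
      qed
      finally show ?case by (simp add: diff_divide_distrib sum_divide_distrib)
    qed
  qed
  have "pi^2/6 - (\<Sum>j=1..n. - (1/(real j)^2)) = zeta2 + (\<Sum>k=1..n. 1 / (real k)^2)"
    by (simp add: z sum_negf)
  with L3 have "((\<lambda>x::real. ln (pi * x / sin (pi * x)) / x^2 - (\<Sum>j=1..n. ln (1 - x^2/(real j)^2) / x^2))
      \<longlongrightarrow> zeta2 + (\<Sum>k=1..n. 1 / (real k)^2)) (at_right 0)" by simp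
  thus ?thesis using ev by (rule Lim_transform_eventually)
qed

end
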